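(* Let $\mathcal G$ be locally $\mathrm d$-finite and let $\mathcal L:\mathbb R^V\supset\mathrm{Dom}(\mathcal L)\to\mathbb R^V$ be a linear operator with $\mathcal C_{\mathrm{fs}}(\mathcal G)\subset\mathrm{Dom}(\mathcal L)$ that is bounded with respect to the sup-norm, semi-local, and a rough differential operator. Then ${}^{\mathcal O}\mathrm{Ric}_{\mathcal L}(x,y)$ is finite for all distinct $x,y\in V$.
   Context: $\mathcal G$ is a locally finite graph with vertex set $V$ and a distance $\mathrm d$ on $V$ with $(V,\mathrm d)$ complete; locally $\mathrm d$-finite means every $\mathrm d$-metric ball is a finite set. $\mathcal C_{\mathrm{fs}}(\mathcal G)$ = finitely supported functions; $\mathrm{Lip}(1)$ = functions with $|f(u)-f(v)|\le\mathrm d(u,v)$; $\nabla_{xy}f=(f(y)-f(x))/\mathrm d(x,y)$; ${}^{\mathcal O}\mathrm{Ric}_{\mathcal L}(x,y):=\inf\{\nabla_{yx}\mathcal Lf:\ f\in\mathcal C_{\mathrm{fs}}\cap\mathrm{Lip}(1),\ \nabla_{xy}f=1\}$. Bounded: there is $B>0$ with $\sup|\mathcal Lf|\le B\sup|f|$ for all $f\in\mathcal C_{\mathrm{fs}}$. Semi-local: there exist $R>0$ and $C_2>0$ such that for all $x$ and all $f\in\mathrm{Dom}(\mathcal L)\cap\mathrm{Lip}(1)$, $f|_{\mathcal B_R(x)}=0$ implies $\mathcal Lf(x)=0$, and $|\mathcal B_{2R}(x)|\le C_2$ for all $x$ ($\mathcal B_r(x)$ the $\mathrm d$-ball). Rough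 differential operator: $\mathcal L1=0$. *)

theory Defs
  imports "HOL-Analysis.Analysis"
begin

text \<open>The vertex set V is the universe of the type 'v. d is a distance on V.\<close>

definition is_distance :: "('v \<Rightarrow> 'v \<Rightarrow> real) \<Rightarrow> bool" where
  "is_distance d \<longleftrightarrow>
     (\<forall>x y. 0 \<le> d x y) \<and> (\<forall>x y. d x y = 0 \<longleftrightarrow> x = y) \<and>
     (\<forall>x y. d x y = d y x) \<and> (\<forall>x y z. d x z \<le> d x y + d y z)"

definition d_complete :: "('v \<Rightarrow> 'v \<Rightarrow> real) \<Rightarrow> bool" where
  "d_complete d \<longleftrightarrow>
     (\<forall>s :: nat \<Rightarrow> 'v. (\<forall>e>0. \<exists>N. \<forall>m\<ge>N. \<forall>n\<ge>N. d (s m) (s n) < e)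
        \<longrightarrow> (\<exists>l. \<forall>e>0. \<exists>N. \<forall>n\<ge>N. d (s n) l < e))"

definition dball :: "('v \<Rightarrow> 'v \<Rightarrow> real) \<Rightarrow> 'v \<Rightarrow> real \<Rightarrow> 'v set" where
  "dball d x r = {y. d x y \<le> r}"

definition locally_d_finite :: "('v \<Rightarrow> 'v \<Rightarrow> real) \<Rightarrow> bool" where
  "locally_d_finite d \<longleftrightarrow> (\<forall>x r. finite (dball d x r))"

definition locally_finite_graph :: "('v \<Rightarrow> 'v \<Rightarrow> bool) \<Rightarrow> bool" where
  "locally_finite_graph E \<longleftrightarrow> (\<forall>x y. E x y \<longleftrightarrow> E y x) \<and> (\<forall>x. finite {y. E x y})"

definition Cfs :: "('v \<Rightarrow> real) set" where
  "Cfs = {f. finite {x. f x \<noteq> 0}}"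

definition Lip1 :: "('v \<Rightarrow> 'v \<Rightarrow> real) \<Rightarrow> ('v \<Rightarrow> real) set" where
  "Lip1 d = {f. \<forall>u v. \<bar>f u - f v\<bar> \<le> d u v}"

definition grad :: "('v \<Rightarrow> 'v \<Rightarrow> real) \<Rightarrow> 'v \<Rightarrow> 'v \<Rightarrow> ('v \<Rightarrow> real) \<Rightarrow> real" where
  "grad d x y f = (f y - f x) / d x y"

text \<open>Ollivier-type curvature, valued in the extended reals (Inf of the empty set is \<infinity>).\<close>
definition ORic :: "('v \<Rightarrow> 'v \<Rightarrow> real) \<Rightarrow> (('v \<Rightarrow> real) \<Rightarrow> ('v \<Rightarrow> real)) \<Rightarrow> 'v \<Rightarrow> 'v \<Rightarrow> ereal" where
  "ORic d L x y = Inf {ereal (grad d y x (L f)) | f. f \<in> Cfs \<inter> Lip1 d \<and> grad d x y f = 1}"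

definition linear_op_on :: "('v \<Rightarrow> real) set \<Rightarrow> (('v \<Rightarrow> real) \<Rightarrow> ('v \<Rightarrow> real)) \<Rightarrow> bool" where
  "linear_op_on D L \<longleftrightarrow>
     (\<forall>f\<in>D. \<forall>g\<in>D. \<forall>a b::real. (\<lambda>x. a * f x + b * g x) \<in> D \<and>
        L (\<lambda>x. a * f x + b * g x) = (\<lambda>x. a * L f x + b * L g x))"

definition sup_bounded :: "(('v \<Rightarrow> real) \<Rightarrow> ('v \<Rightarrow> real)) \<Rightarrow> bool" where
  "sup_bounded L \<longleftrightarrow> (\<exists>B>0. \<forall>f\<in>Cfs. (\<forall>x. \<bar>L f x\<bar> \<le> B * (SUP y. \<bar>f y\<bar>)))"

definition semi_local :: "('v \<Rightarrow> 'v \<Rightarrow> real) \<Rightarrow> ('v \<Rightarrow> real) set \<Rightarrow> (('v \<Rightarrow> real) \<Rightarrow> ('v \<Rightarrow> real)) \<Rightarrow> bool" where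
  "semi_local d D L \<longleftrightarrow> (\<exists>R>0. \<exists>C2>0.
     (\<forall>x. \<forall>f\<in>D \<inter> Lip1 d. (\<forall>y\<in>dball d x R. f y = 0) \<longrightarrow> L f x = 0) \<and>
     (\<forall>x. real (card (dball d x (2 * R))) \<le> C2))"

definition rough_diff_op :: "('v \<Rightarrow> real) set \<Rightarrow> (('v \<Rightarrow> real) \<Rightarrow> ('v \<Rightarrow> real)) \<Rightarrow> bool" where
  "rough_diff_op D L \<longleftrightarrow> (\<lambda>_. 1) \<in> D \<and> L (\<lambda>_. 1) = (\<lambda>_. 0)"

end

theory Submission
  imports Defs
begin

lemma clip_lip: "\<bar>max (-M) (min M a) - max (-M) (min M b)\<bar> \<le> \<bar>a - b\<bar>" for M a b :: real
  by (simp add: abs_if max_def min_def)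

lemma lin_app:
  assumes "linear_op_on D L" "f \<in> D" "g \<in> D"
  shows "(\<lambda>x. a * f x + b * g x) \<in> D \<and> L (\<lambda>x. a * f x + b * g x) = (\<lambda>x. a * L f x + b * L g x)"
  using assms unfolding linear_op_on_def by blast

lemma lower_bound:
  fixes d :: "'v \<Rightarrow> 'v \<Rightarrow> real" and D :: "('v \<Rightarrow> real) set" and L :: "('v \<Rightarrow> real) \<Rightarrow> ('v \<Rightarrow> real)"
  assumes dist: "is_distance d"
    and lin: "linear_op_on D L" and CD: "Cfs \<subseteq> D"
    and B: "B > 0" "\<forall>f\<in>Cfs. (\<forall>x. \<bar>L f x\<bar> \<le> B * (SUP y. \<bar>f y\<bar>))"
    and R: "R > 0" "\<forall>x. \<forall>f\<in>D \<inter> Lip1 d. (\<forall>y\<in>dball d x R. f y = 0) \<longrightarrow> L f x = 0"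
    and rough: "rough_diff_op D L"
    and f: "f \<in> Cfs" "f \<in> Lip1 d"
    and z: "z = x \<or> z = y"
  shows "\<bar>L f z\<bar> \<le> B * (2 * (R + d x y))"
proof -
  define M where "M = R + d x y"
  have one: "(\<lambda>_. 1::real) \<in> D" "L (\<lambda>_. 1) = (\<lambda>_. 0)" using rough by (auto simp: rough_diff_op_def)
  have fD: "f \<in> D" using f CD by auto
  have flip: "\<bar>f u - f v\<bar> \<le> d u v" for u v using f(2) by (auto simp: Lip1_def)
  have dsym: "d u v = d v u" and dtri: "d u w \<le> d u v + d v w" and dnn: "0 \<le> d u v" for u v w
    using dist by (auto simp: is_distance_def)
  define g where "g = (\<lambda>v. 1 * f v + (- f x) * 1)"
  have gD: "g \<in> D" and Lg: "L g = (\<lambda>v. 1 * L f v + (- f x) * L (\<lambda>_. 1) v)"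
    using lin_app[OF lin fD one(1), of 1 "- f x"] unfolding g_def by blast+
  have Lg': "L g = L f" using Lg one(2) by simp
  define k where "k = (\<lambda>v. max (-M) (min M (g v)))"
  define c where "c = max (-M) (min M (- f x))"
  define k0 where "k0 = (\<lambda>v. k v - c)"
  have sub: "{v. k0 v \<noteq> 0} \<subseteq> {v. f v \<noteq> 0}" unfolding k0_def k_def c_def g_def by auto
  have "finite {v. f v \<noteq> 0}" using f(1) by (simp add: Cfs_def)
  hence k0C: "k0 \<in> Cfs" using finite_subset[OF sub] by (simp add: Cfs_def)
  hence k0D: "k0 \<in> D" using CD by auto
  have keq: "k = (\<lambda>v. 1 * k0 v + c * 1)" unfolding k0_def by auto
  have kD: "k \<in> D" and Lk: "L k = (\<lambda>v. 1 * L k0 v + c * L (\<lambda>_. 1) v)"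
    using lin_app[OF lin k0D one(1), of 1 c] unfolding keq by blast+
  have Lk': "L k = L k0" using Lk one(2) by simp
  define h where "h = (\<lambda>v. (1/2) * k v + (-1/2) * g v)"
  have hD: "h \<in> D" and Lh: "L h = (\<lambda>v. (1/2) * L k v + (-1/2) * L g v)"
    using lin_app[OF lin kD gD, of "1/2" "-1/2"] unfolding h_def by blast+
  have hlip: "h \<in> Lip1 d"
  proof -
    have "\<bar>h u - h v\<bar> \<le> d u v" for u v
    proof -
      have a: "\<bar>k u - k v\<bar> \<le> d u v" using clip_lip[of M "g u" "g v"] flip[of u v]
        unfolding k_def g_def by simp
      have b: "\<bar>g u - g v\<bar> \<le> d u v" using flip[of u v] unfolding g_def by simp
      have "h u - h v = (1/2) * (k u - k v) - (1/2) * (g u - g v)" unfolding h_def by (simp add: field_simps)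
      thus ?thesis using a b by (auto simp: abs_le_iff field_simps)
    qed
    thus ?thesis by (simp add: Lip1_def)
  qed
  have hz: "\<forall>w\<in>dball d z R. h w = 0"
  proof
    fix w assume "w \<in> dball d z R"
    hence dw: "d z w \<le> R" by (simp add: dball_def)
    have "d x w \<le> d x z + d z w" by (rule dtri)
    moreover have "d x z \<le> d x y"
    proof (cases "z = x")
      case True
      have "d x x = 0" using dist by (simp add: is_distance_def)
      then show ?thesis using True dnn[of x y] by simp
    next
      case False
      then show ?thesis using z by simp
    qed
    ultimately have "d x w \<le> M" using dw unfolding M_def by linarith
    hence "\<bar>g w\<bar> \<le> M" using flip[of w x] dsym[of w x] unfolding g_def by simp
    hence "k w = g w" unfolding k_def by (simp add: abs_le_iff)
    thus "h w = 0" unfolding h_def by simp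
  qed
  have "L h z = 0" using R(2) hD hlip hz by blast
  moreover have "L h z = (1/2) * L k z + (-1/2) * L g z" using Lh by simp
  ultimately have "L k z = L g z" by linarith
  hence LfkZ: "L f z = L k0 z" using Lk' Lg' by simp
  have M0: "M \<ge> 0" using R(1) dnn[of x y] unfolding M_def by linarith
  have bdd: "\<bar>k0 v\<bar> \<le> 2 * M" for v
  proof -
    have "-M \<le> k v" "k v \<le> M" "-M \<le> c" "c \<le> M" using M0 unfolding k_def c_def by auto
    thus ?thesis unfolding k0_def by linarith
  qed
  have "(SUP y. \<bar>k0 y\<bar>) \<le> 2 * M" by (rule cSUP_least) (auto simp: bdd)
  hence "\<bar>L k0 z\<bar> \<le> B * (2 * M)" using B k0C by (meson mult_left_mono less_imp_le order_trans)
  thus ?thesis using LfkZ M_def by simp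
qed

theorem mainTheorem15:
  fixes E :: "'v \<Rightarrow> 'v \<Rightarrow> bool" and d :: "'v \<Rightarrow> 'v \<Rightarrow> real"
    and D :: "('v \<Rightarrow> real) set" and L :: "('v \<Rightarrow> real) \<Rightarrow> ('v \<Rightarrow> real)"
  assumes "locally_finite_graph E"
    and "is_distance d" and "d_complete d"
    and "locally_d_finite d"
    and "linear_op_on D L" and "Cfs \<subseteq> D"
    and "sup_bounded L"
    and "semi_local d D L"
    and "rough_diff_op D L"
  shows "\<forall>x y. x \<noteq> y \<longrightarrow> ORic d L x y \<noteq> \<infinity> \<and> ORic d L x y \<noteq> -\<infinity>"
proof (intro allI impI)
  fix x y :: 'v assume xy: "x \<noteq> y"
  obtain B where B: "B > 0" "\<forall>f\<in>Cfs. (\<forall>x. \<bar>L f x\<bar> \<le> B * (SUP y. \<bar>f y\<bar>))"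
    using assms(7) by (auto simp: sup_bounded_def)
  obtain R where R: "R > 0" "\<forall>x. \<forall>f\<in>D \<inter> Lip1 d. (\<forall>y\<in>dball d x R. f y = 0) \<longrightarrow> L f x = 0"
    using assms(8) unfolding semi_local_def by blast
  have dsym: "d u v = d v u" and dtri: "d u w \<le> d u v + d v w" and dnn: "0 \<le> d u v" for u v w
    using assms(2) by (auto simp: is_distance_def)
  have "d x y \<noteq> 0" using assms(2) xy by (auto simp: is_distance_def)
  hence dpos: "d x y > 0" using dnn[of x y] by linarith
  define S where "S = {ereal (grad d y x (L f)) | f. f \<in> Cfs \<inter> Lip1 d \<and> grad d x y f = 1}"
  have OR: "ORic d L x y = Inf S" unfolding ORic_def S_def by simp
  define f0 where "f0 = (\<lambda>v. max 0 (d x y - d y v))"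
  have f0C: "f0 \<in> Cfs"
  proof -
    have "{v. f0 v \<noteq> 0} \<subseteq> dball d y (d x y)" unfolding f0_def dball_def by auto
    moreover have "finite (dball d y (d x y))" using assms(4) by (simp add: locally_d_finite_def)
    ultimately show ?thesis using finite_subset by (simp add: Cfs_def) blast
  qed
  have f0L: "f0 \<in> Lip1 d"
  proof -
    have "\<bar>f0 u - f0 v\<bar> \<le> d u v" for u v
    proof -
      have "\<bar>f0 u - f0 v\<bar> \<le> \<bar>d y u - d y v\<bar>" unfolding f0_def by (simp add: abs_if max_def)
      moreover have "d y u \<le> d y v + d v u" "d y v \<le> d y u + d u v" by (rule dtri)+
      ultimately show ?thesis using dsym[of u v] by linarith
    qed
    thus ?thesis by (simp add: Lip1_def)
  qed
  have dyy: "d y y = 0" using assms(2) by (simp add: is_distance_def)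
  have f0g: "grad d x y f0 = 1" unfolding grad_def f0_def using dpos dsym[of x y] dyy
    by simp
  have mem: "ereal (grad d y x (L f0)) \<in> S" unfolding S_def using f0C f0L f0g by blast
  have "Inf S \<le> ereal (grad d y x (L f0))" using mem by (rule Inf_lower)
  hence ninf: "Inf S \<noteq> \<infinity>" by auto
  have lb: "ereal (- 4 * B * (R + d x y) / d x y) \<le> Inf S"
  proof (rule Inf_greatest)
    fix s assume "s \<in> S"
    then obtain f where s: "s = ereal (grad d y x (L f))" and f: "f \<in> Cfs" "f \<in> Lip1 d"
      unfolding S_def by blast
    have bx: "\<bar>L f x\<bar> \<le> B * (2 * (R + d x y))"
      by (rule lower_bound[OF assms(2,5,6) B R assms(9) f]) simp
    have byy: "\<bar>L f y\<bar> \<le> B * (2 * (R + d x y))"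
      by (rule lower_bound[OF assms(2,5,6) B R assms(9) f]) simp
    have "- 4 * B * (R + d x y) \<le> L f x - L f y" using bx byy by linarith
    hence "- 4 * B * (R + d x y) / d x y \<le> (L f x - L f y) / d x y"
      using dpos divide_right_mono[of "- 4 * B * (R + d x y)" "L f x - L f y" "d x y"] by simp
    thus "ereal (- 4 * B * (R + d x y) / d x y) \<le> s" unfolding s grad_def using dsym[of y x] by simp
  qed
  hence "Inf S \<noteq> -\<infinity>" by auto
  thus "ORic d L x y \<noteq> \<infinity> \<and> ORic d L x y \<noteq> -\<infinity>" using ninf OR by simp
qed

end
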